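(* If $(A_n)_{n=0}^\infty$ is an Appell sequence, then the Wronskian Appell polynomials $(A_\lambda)_{\lambda}$ (indexed by all integer partitions $\lambda$) satisfy \[ F_\lambda^{\vphantom'}A_\lambda' = \lvert \lambda \rvert \sum_{\mu \lessdot \lambda} F_\mu A_\mu, \] where the sum is over all partitions $\mu$ covered by $\lambda$ in Young's lattice, i.e. obtained from $\lambda$ by removing one cell of its diagram.
   Context: An Appell sequence is a sequence of polynomials $(A_n)_{n\ge0}$ with $A_0=1$ and $A_n'=nA_{n-1}$ for $n\ge1$. For a partition $\lambda$ of length $r$, let $(n_1,\dots,n_r)=(\lambda_r,\lambda_{r-1}+1,\dots,\lambda_1+r-1)$ and $A_\lambda=\operatorname{Wr}[A_{n_1},\dots,A_{n_r}]/\Delta(n_1,\dots,n_r)$, where $\operatorname{Wr}$ is the Wronskian and $\Delta(x_1,\dots,x_r)=\prod_{i<j}(x_j-x_i)$; $A_\emptyset=1$. $F_\lambda$ is the number of standard Young tableaux of shape $\lambda$ and $|\lambda|$ its size. *)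

theory Defs
  imports "HOL-Computational_Algebra.Polynomial" "Jordan_Normal_Form.Determinant"
begin

definition appell :: "(nat \<Rightarrow> complex poly) \<Rightarrow> bool" where
  "appell A \<longleftrightarrow> A 0 = 1 \<and> (\<forall>n\<ge>1. pderiv (A n) = of_nat n * A (n - 1))"

definition is_partition :: "nat list \<Rightarrow> bool" where
  "is_partition lam \<longleftrightarrow> sorted_wrt (\<ge>) lam \<and> (\<forall>x\<in>set lam. 0 < x)"

definition psize :: "nat list \<Rightarrow> nat" where
  "psize lam = sum_list lam"

definition cells :: "nat list \<Rightarrow> (nat \<times> nat) set" where
  "cells lam = {(i, j). i < length lam \<and> j < lam ! i}"

definition SYT :: "nat list \<Rightarrow> (nat \<times> nat \<Rightarrow> nat) set" where
  "SYT lam = {T. bij_betw T (cells lam) {1..psize lam}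
              \<and> (\<forall>c. c \<notin> cells lam \<longrightarrow> T c = 0)
              \<and> (\<forall>i j. (i, Suc j) \<in> cells lam \<longrightarrow> T (i, j) < T (i, Suc j))
              \<and> (\<forall>i j. (Suc i, j) \<in> cells lam \<longrightarrow> T (i, j) < T (Suc i, j))}"

definition num_SYT :: "nat list \<Rightarrow> nat" where
  "num_SYT lam = card (SYT lam)"

definition covered_by :: "nat list \<Rightarrow> nat list \<Rightarrow> bool" where
  "covered_by mu lam \<longleftrightarrow> is_partition mu \<and> cells mu \<subseteq> cells lam
                         \<and> card (cells lam - cells mu) = 1"

text \<open>The sequence (n_1,...,n_r) = (lam_r, lam_(r-1)+1, ..., lam_1 + r - 1), 0-indexed.\<close>
definition degs :: "nat list \<Rightarrow> nat \<Rightarrow> nat" where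
  "degs lam k = lam ! (length lam - 1 - k) + k"

definition wronskian :: "nat \<Rightarrow> (nat \<Rightarrow> complex poly) \<Rightarrow> complex poly" where
  "wronskian r f = det (mat r r (\<lambda>(i, j). (pderiv ^^ i) (f j)))"

definition vandermonde_int :: "nat \<Rightarrow> (nat \<Rightarrow> nat) \<Rightarrow> int" where
  "vandermonde_int r x = (\<Prod>j<r. \<Prod>i<j. int (x j) - int (x i))"

definition wronskian_appell :: "(nat \<Rightarrow> complex poly) \<Rightarrow> nat list \<Rightarrow> complex poly" where
  "wronskian_appell A lam =
     (if lam = [] then 1
      else smult (inverse (of_int (vandermonde_int (length lam) (degs lam))))
             (wronskian (length lam) (\<lambda>k. A (degs lam k))))"

end

theory Submission
  imports Defs
begin


lemma det_col_scale:
  fixes c :: "nat \<Rightarrow> 'a::comm_ring_1"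
  shows "det (mat r r (\<lambda>(i,j). c j * a i j)) = (\<Prod>j<r. c j) * det (mat r r (\<lambda>(i,j). a i j))"
proof -
  have pr: "(\<Prod>i=0..<r. c (p i)) = (\<Prod>j<r. c j)" if "p permutes {0..<r}" for p
  proof -
    have "(\<Prod>i=0..<r. c (p i)) = (\<Prod>j=0..<r. c j)"
      using prod.reindex_bij_betw[OF permutes_imp_bij[OF that], of c] by simp
    then show ?thesis by (simp add: atLeast0LessThan)
  qed
  have "det (mat r r (\<lambda>(i,j). c j * a i j)) =
     (\<Sum>p\<in>{p. p permutes {0..<r}}. signof p * (\<Prod>i=0..<r. c (p i) * a i (p i)))"
    by (subst det_def'[of _ r]) (auto intro!: sum.cong prod.cong simp: permutes_in_image)
  also have "\<dots> = (\<Sum>p\<in>{p. p permutes {0..<r}}. (\<Prod>j<r. c j) * (signof p * (\<Prod>i=0..<r. a i (p i))))"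
    by (intro sum.cong refl) (simp add: prod.distrib pr mult_ac)
  also have "\<dots> = (\<Prod>j<r. c j) * det (mat r r (\<lambda>(i,j). a i j))"
    by (subst det_def'[of _ r]) (auto simp: sum_distrib_left intro!: sum.cong prod.cong arg_cong2[where f="(*)"] simp: permutes_in_image)
  finally show ?thesis .
qed

lemma det_first_col:
  fixes M :: "'a::comm_ring_1 mat"
  assumes M: "M \<in> carrier_mat (Suc r) (Suc r)" and m0: "M $$ (0,0) = 1"
    and mi: "\<And>i. 0 < i \<Longrightarrow> i < Suc r \<Longrightarrow> M $$ (i,0) = 0"
  shows "det M = det (mat r r (\<lambda>(i,j). M $$ (Suc i, Suc j)))"
proof -
  have "det M = (\<Sum>i<Suc r. M $$ (i,0) * cofactor M i 0)"
    by (rule laplace_expansion_column[OF M]) simp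
  also have "\<dots> = M $$ (0,0) * cofactor M 0 0"
    by (subst sum.lessThan_Suc_shift) (simp add: mi)
  also have "\<dots> = det (mat_delete M 0 0)" by (simp add: m0 cofactor_def)
  also have "mat_delete M 0 0 = mat r r (\<lambda>(i,j). M $$ (Suc i, Suc j))"
    using M by (auto simp: mat_delete_def intro!: eq_matI)
  finally show ?thesis .
qed

lemma wronskian_leib:
  "wronskian r f = (\<Sum>p\<in>{p. p permutes {0..<r}}. signof p * (\<Prod>i=0..<r. (pderiv ^^ i) (f (p i))))"
  unfolding wronskian_def
  by (subst det_def'[of _ r]) (auto intro!: sum.cong prod.cong simp: permutes_in_image)

lemma wronskian_cong:
  assumes "\<And>j. j < r \<Longrightarrow> f j = g j"
  shows "wronskian r f = wronskian r g"
  unfolding wronskian_leib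
  by (intro sum.cong refl arg_cong2[where f="(*)"] prod.cong) (auto simp: assms permutes_in_image)

lemma funpow_pderiv_smult: "(pderiv ^^ i) (smult c p) = smult c ((pderiv ^^ i) p)"
  by (induction i) (auto simp: pderiv_smult)

lemma wronskian_smult:
  "wronskian r (\<lambda>j. smult (c j) (g j)) = smult (\<Prod>j<r. c j) (wronskian r g)"
proof -
  have "wronskian r (\<lambda>j. smult (c j) (g j)) = det (mat r r (\<lambda>(i,j). [:c j:] * (pderiv ^^ i) (g j)))"
    unfolding wronskian_def by (simp add: funpow_pderiv_smult)
  also have "\<dots> = (\<Prod>j<r. [:c j:]) * wronskian r g"
    unfolding wronskian_def by (subst det_col_scale) simp
  also have "(\<Prod>j<r. [:c j:]) = [:\<Prod>j<r. c j:]"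
    by (induction r) auto
  finally show ?thesis by simp
qed

lemma wronskian_one_first:
  assumes "g 0 = 1"
  shows "wronskian (Suc r) g = wronskian r (\<lambda>j. pderiv (g (Suc j)))"
proof -
  have d1: "(pderiv ^^ i) (1::complex poly) = (if i = 0 then 1 else 0)" for i
    by (induction i) (auto simp: pderiv_0)
  show ?thesis
    unfolding wronskian_def
    by (subst det_first_col) (auto simp: assms d1 funpow_Suc_right simp del: funpow.simps
        intro!: arg_cong[where f=det] eq_matI)
qed

lemma wronskian_ident:
  assumes "i \<noteq> j" "i < r" "j < r" "f i = f j"
  shows "wronskian r f = 0"
  unfolding wronskian_def
  by (rule det_identical_columns[OF _ assms(1-3)]) (use assms in \<open>auto intro!: eq_vecI\<close>)



lemma pderiv_signof: "pderiv ((signof p :: complex poly) * q) = signof p * pderiv q"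
  by (simp add: pderiv_mult sign_def pderiv_minus)

lemma pderiv_sum: "pderiv (sum f A) = (\<Sum>x\<in>A. pderiv (f x))"
  using higher_pderiv_sum[of 1 f A] by simp

lemma wronskian_pderiv:
  "pderiv (wronskian r f) = (\<Sum>k<r. wronskian r (f(k := pderiv (f k))))"
proof -
  let ?P = "{p. p permutes {0..<r}}"
  have inner: "(\<Sum>k<r. (\<Prod>i=0..<r. (pderiv ^^ i) ((f(k := pderiv (f k))) (p i)))) =
      pderiv (\<Prod>i=0..<r. (pderiv ^^ i) (f (p i)))" if p: "p permutes {0..<r}" for p
  proof -
    have "(\<Sum>k<r. (\<Prod>i=0..<r. (pderiv ^^ i) ((f(k := pderiv (f k))) (p i)))) =
        (\<Sum>a=0..<r. (\<Prod>i=0..<r. (pderiv ^^ i) ((f(p a := pderiv (f (p a)))) (p i))))"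
      using sum.reindex_bij_betw[OF permutes_imp_bij[OF p],
          of "\<lambda>k. (\<Prod>i=0..<r. (pderiv ^^ i) ((f(k := pderiv (f k))) (p i)))"]
      by (simp add: atLeast0LessThan)
    also have "\<dots> = (\<Sum>a=0..<r. (\<Prod>i\<in>{0..<r}-{a}. (pderiv ^^ i) (f (p i))) * pderiv ((pderiv ^^ a) (f (p a))))"
    proof (intro sum.cong refl)
      fix a assume a: "a \<in> {0..<r}"
      have "(\<Prod>i=0..<r. (pderiv ^^ i) ((f(p a := pderiv (f (p a)))) (p i))) =
            (pderiv ^^ a) (pderiv (f (p a))) * (\<Prod>i\<in>{0..<r}-{a}. (pderiv ^^ i) ((f(p a := pderiv (f (p a)))) (p i)))"
        using a by (subst prod.remove[of _ a]) auto
      also have "(\<Prod>i\<in>{0..<r}-{a}. (pderiv ^^ i) ((f(p a := pderiv (f (p a)))) (p i))) =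
                 (\<Prod>i\<in>{0..<r}-{a}. (pderiv ^^ i) (f (p i)))"
        using permutes_inj[OF p] by (intro prod.cong refl) (auto dest: injD)
      also have "(pderiv ^^ a) (pderiv (f (p a))) = pderiv ((pderiv ^^ a) (f (p a)))"
        by (metis comp_apply funpow_Suc_right funpow_swap1)
      finally show "(\<Prod>i=0..<r. (pderiv ^^ i) ((f(p a := pderiv (f (p a)))) (p i))) =
          (\<Prod>i\<in>{0..<r}-{a}. (pderiv ^^ i) (f (p i))) * pderiv ((pderiv ^^ a) (f (p a)))"
        by (simp add: mult_ac)
    qed
    also have "\<dots> = pderiv (\<Prod>i=0..<r. (pderiv ^^ i) (f (p i)))"
      by (simp add: pderiv_prod)
    finally show ?thesis .
  qed
  have "pderiv (wronskian r f) = (\<Sum>p\<in>?P. signof p * pderiv (\<Prod>i=0..<r. (pderiv ^^ i) (f (p i))))"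
    unfolding wronskian_leib pderiv_sum pderiv_signof ..
  also have "\<dots> = (\<Sum>p\<in>?P. \<Sum>k<r. signof p * (\<Prod>i=0..<r. (pderiv ^^ i) ((f(k := pderiv (f k))) (p i))))"
    by (intro sum.cong refl) (simp only: mem_Collect_eq inner[symmetric] sum_distrib_left)
  also have "\<dots> = (\<Sum>k<r. wronskian r (f(k := pderiv (f k))))"
    unfolding wronskian_leib by (rule sum.swap)
  finally show ?thesis .
qed



definition ffc :: "complex \<Rightarrow> nat \<Rightarrow> complex" where
  "ffc z i = (\<Prod>k<i. z - of_nat k)"

lemma ffc_Suc: "ffc z (Suc i) = ffc z i * (z - of_nat i)"
  by (simp add: ffc_def)

lemma ffc_0[simp]: "ffc z 0 = 1" by (simp add: ffc_def)

lemma prod_vdm_Suc: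
  "(\<Prod>j<Suc r. \<Prod>i<j. (x j - x i :: complex)) =
   (\<Prod>j<r. (x (Suc j) - x 0)) * (\<Prod>j<r. \<Prod>i<j. x (Suc j) - x (Suc i))"
  by (simp add: prod.lessThan_Suc_shift prod.distrib del: prod.lessThan_Suc)

lemma falling_vdm:
  "det (mat r r (\<lambda>(i,j). ffc (x j) i)) = (\<Prod>j<r. \<Prod>i<j. x j - x i)"
proof (induction r arbitrary: x)
  case 0
  then show ?case by (simp add: det_dim_zero)
next
  case (Suc r)
  define M where "M = mat (Suc r) (Suc r) (\<lambda>(i,j). ffc (x j) i)"
  define L :: "complex mat" where "L = mat (Suc r) (Suc r) (\<lambda>(i,j). if i = j then 1 else if i = Suc j then - (x 0 - of_nat j) else 0)"
  have M: "M \<in> carrier_mat (Suc r) (Suc r)" and L: "L \<in> carrier_mat (Suc r) (Suc r)"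
    by (auto simp: M_def L_def)
  have detL: "det L = 1"
  proof -
    have "diag_mat L = map (\<lambda>i. 1) [0..<Suc r]"
      by (auto simp: diag_mat_def L_def intro!: map_cong simp del: upt_Suc)
    moreover have "prod_list (map (\<lambda>i. 1) xs) = (1::complex)" for xs :: "nat list"
      by (induction xs) auto
    ultimately show ?thesis by (subst det_lower_triangular[OF _ L]) (auto simp: L_def simp del: upt_Suc)
  qed
  have LM: "(L * M) $$ (i,j) = (if i = 0 then 1 else ffc (x j) (i - 1) * (x j - x 0))"
    if i: "i < Suc r" and j: "j < Suc r" for i j
  proof -
    have "(L * M) $$ (i,j) = (\<Sum>k<Suc r. L $$ (i,k) * M $$ (k,j))"
      using i j L M by (simp add: scalar_prod_def atLeast0LessThan)
    also have "\<dots> = (\<Sum>k<Suc r. (if k = i then M $$ (k,j) else 0) +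
          (if Suc k = i then - (x 0 - of_nat k) * M $$ (k,j) else 0))"
      using i by (intro sum.cong refl) (auto simp: L_def)
    also have "\<dots> = M $$ (i,j) + (if i = 0 then 0 else - (x 0 - of_nat (i - 1)) * M $$ (i - 1, j))"
      using i by (cases i) (simp_all add: sum.distrib sum.delta')
    also have "\<dots> = (if i = 0 then 1 else ffc (x j) (i - 1) * (x j - x 0))"
      using i j by (cases i) (auto simp: M_def ffc_Suc algebra_simps)
    finally show ?thesis .
  qed
  have "det M = det (L * M)" using det_mult[OF L M] detL by simp
  also have "\<dots> = det (mat r r (\<lambda>(i,j). (L * M) $$ (Suc i, Suc j)))"
    by (rule det_first_col) (use L M LM in auto)
  also have "\<dots> = det (mat r r (\<lambda>(i,j). (x (Suc j) - x 0) * ffc (x (Suc j)) i))"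
    by (intro arg_cong[where f=det] eq_matI) (auto simp: LM mult_ac)
  also have "\<dots> = (\<Prod>j<r. (x (Suc j) - x 0)) * det (mat r r (\<lambda>(i,j). ffc (x (Suc j)) i))"
    by (rule det_col_scale)
  also have "\<dots> = (\<Prod>j<Suc r. \<Prod>i<j. x j - x i)"
    by (simp only: prod_vdm_Suc Suc.IH)
  finally show ?case by (simp add: M_def)
qed

lemma ffc_nat_zero: "m < i \<Longrightarrow> ffc (of_nat m) i = 0"
  unfolding ffc_def by (auto simp: prod_zero_iff intro!: bexI[of _ m])

lemma pderiv_monom_pow: "(pderiv ^^ i) (monom (1::complex) m) = monom (ffc (of_nat m) i) (m - i)"
proof (induction i)
  case 0 then show ?case by simp
next
  case (Suc i)
  have "of_nat (m - i) * ffc (of_nat m) i = ffc (of_nat m) (Suc i)"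
    by (cases "i \<le> m") (auto simp: ffc_Suc of_nat_diff ffc_nat_zero mult_ac)
  then show ?case using Suc by (simp add: pderiv_monom)
qed

lemma prod_monom: "finite S \<Longrightarrow> (\<Prod>i\<in>S. monom (a i) (e i)) = monom (\<Prod>i\<in>S. a i) (\<Sum>i\<in>S. e i)"
  by (induction S rule: finite_induct) (auto simp: mult_monom)

lemma wronskian_monom:
  "wronskian r (\<lambda>j. monom 1 (n j)) =
     smult (det (mat r r (\<lambda>(i,j). ffc (of_nat (n j)) i))) (monom 1 ((\<Sum>j<r. n j) - (\<Sum>i<r. i)))"
proof -
  let ?E = "(\<Sum>j<r. n j) - (\<Sum>i<r. i)"
  have trm: "(\<Prod>i=0..<r. (pderiv ^^ i) (monom 1 (n (p i)))) =
        monom (\<Prod>i=0..<r. ffc (of_nat (n (p i))) i) ?E" if p: "p permutes {0..<r}" for p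
  proof (cases "\<forall>i<r. i \<le> n (p i)")
    case True
    have "(\<Sum>i=0..<r. n (p i) - i) = (\<Sum>i=0..<r. n (p i)) - (\<Sum>i=0..<r. i)"
      by (rule sum_subtractf_nat) (use True in auto)
    also have "(\<Sum>i=0..<r. n (p i)) = (\<Sum>j=0..<r. n j)"
      using sum.reindex_bij_betw[OF permutes_imp_bij[OF p], of n] by simp
    finally have "(\<Sum>i=0..<r. n (p i) - i) = ?E" by (simp add: atLeast0LessThan)
    then show ?thesis by (simp add: pderiv_monom_pow prod_monom)
  next
    case False
    then obtain i where i: "i < r" "n (p i) < i" by auto
    have "(\<Prod>i=0..<r. ffc (of_nat (n (p i))) i) = 0"
      using i ffc_nat_zero by (auto simp: prod_zero_iff intro!: bexI[of _ i])
    moreover have "(\<Prod>i=0..<r. (pderiv ^^ i) (monom (1::complex) (n (p i)))) = 0"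
    proof -
      have "(pderiv ^^ i) (monom (1::complex) (n (p i))) = 0" using i by (simp add: pderiv_monom_pow ffc_nat_zero)
      moreover have "i \<in> {0..<r}" using i by simp
      ultimately show ?thesis by (intro prod_zero[OF _ bexI]) auto
    qed
    ultimately show ?thesis by (metis monom_eq_0)
  qed
  have "wronskian r (\<lambda>j. monom 1 (n j)) =
      (\<Sum>p\<in>{p. p permutes {0..<r}}. smult (signof p * (\<Prod>i=0..<r. ffc (of_nat (n (p i))) i)) (monom 1 ?E))"
    unfolding wronskian_leib
    by (intro sum.cong refl) (auto simp: trm smult_monom of_int_poly monom_0 mult_monom[symmetric] simp del: mult_monom)
  also have "\<dots> = smult (det (mat r r (\<lambda>(i,j). ffc (of_nat (n j)) i))) (monom 1 ?E)"
    by (subst det_def'[of _ r]) (auto simp: smult_sum permutes_in_image intro!: sum.cong arg_cong2[where f=smult] arg_cong2[where f="(*)"] prod.cong)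
  finally show ?thesis .
qed



definition corner :: "nat list \<Rightarrow> nat \<Rightarrow> bool" where
  "corner lam i \<longleftrightarrow> i < length lam \<and> (Suc i = length lam \<or> lam ! Suc i < lam ! i)"

definition rem :: "nat list \<Rightarrow> nat \<Rightarrow> nat list" where
  "rem lam i = (if lam ! i = 1 then take i lam else lam[i := lam ! i - 1])"

lemma part_le: "is_partition lam \<Longrightarrow> i \<le> j \<Longrightarrow> j < length lam \<Longrightarrow> lam ! j \<le> lam ! i"
  unfolding is_partition_def
  by (cases "i = j") (auto simp: sorted_wrt_iff_nth_less)

lemma part_pos: "is_partition lam \<Longrightarrow> i < length lam \<Longrightarrow> 0 < lam ! i"
  unfolding is_partition_def by auto

lemma part_intro:
  assumes "\<And>i j. i < j \<Longrightarrow> j < length lam \<Longrightarrow> lam ! j \<le> lam ! i"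
    and "\<And>i. i < length lam \<Longrightarrow> 0 < lam ! i"
  shows "is_partition lam"
  unfolding is_partition_def using assms by (auto simp: sorted_wrt_iff_nth_less in_set_conv_nth)

lemma cells_iff: "(a, b) \<in> cells lam \<longleftrightarrow> a < length lam \<and> b < lam ! a"
  by (simp add: cells_def)

lemma cells_down: "is_partition lam \<Longrightarrow> (Suc a, b) \<in> cells lam \<Longrightarrow> (a, b) \<in> cells lam"
  using part_le[of lam a "Suc a"] by (auto simp: cells_iff)

lemma cells_left: "(a, Suc b) \<in> cells lam \<Longrightarrow> (a, b) \<in> cells lam"
  by (auto simp: cells_iff)

lemma finite_cells: "finite (cells lam)"
proof -
  have "cells lam \<subseteq> {..<length lam} \<times> {..<sum_list lam}"
    by (auto simp: cells_iff intro: order.strict_trans2[OF _ elem_le_sum_list])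
  then show ?thesis by (rule finite_subset) auto
qed

lemma card_cells: "card (cells lam) = psize lam"
proof -
  have "cells lam = Sigma {..<length lam} (\<lambda>i. {..<lam ! i})"
    by (auto simp: cells_iff)
  then have "card (cells lam) = (\<Sum>i<length lam. lam ! i)"
    by (simp add: card_SigmaI)
  then show ?thesis by (simp add: psize_def sum_list_sum_nth atLeast0LessThan)
qed

lemma cells_eq:
  assumes a: "is_partition a" and b: "is_partition b" and eq: "cells a = cells b"
  shows "a = b"
proof -
  have len: "length a = length b"
  proof (rule ccontr)
    assume "length a \<noteq> length b"
    then consider "length a < length b" | "length b < length a" by linarith
    then show False
    proof cases
      case 1
      then have "(length a, 0) \<in> cells b" using part_pos[OF b 1] by (auto simp: cells_iff)
      then have "(length a, 0) \<in> cells a" using eq by simp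
      then show False by (simp add: cells_iff)
    next
      case 2
      then have "(length b, 0) \<in> cells a" using part_pos[OF a 2] by (auto simp: cells_iff)
      then have "(length b, 0) \<in> cells b" using eq by simp
      then show False by (simp add: cells_iff)
    qed
  qed
  show ?thesis
  proof (rule nth_equalityI[OF len])
    fix k assume k: "k < length a"
    show "a ! k = b ! k"
    proof (rule ccontr)
      assume "a ! k \<noteq> b ! k"
      then consider "a ! k < b ! k" | "b ! k < a ! k" by linarith
      then show False
      proof cases
        case 1
        then have "(k, a ! k) \<in> cells b" using k len by (auto simp: cells_iff)
        then have "(k, a ! k) \<in> cells a" using eq by simp
        then show False by (simp add: cells_iff)
      next
        case 2
        then have "(k, b ! k) \<in> cells a" using k len by (auto simp: cells_iff)
        then have "(k, b ! k) \<in> cells b" using eq by simp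
        then show False by (simp add: cells_iff)
      qed
    qed
  qed
qed

lemma corner_one:
  assumes "is_partition lam" "corner lam i" "lam ! i = 1"
  shows "Suc i = length lam"
proof (rule ccontr)
  assume "Suc i \<noteq> length lam"
  then have "Suc i < length lam" "lam ! Suc i < lam ! i" using assms(2) by (auto simp: corner_def)
  then show False using part_pos[OF assms(1), of "Suc i"] assms(3) by simp
qed

lemma rem_part:
  assumes p: "is_partition lam" and c: "corner lam i"
  shows "is_partition (rem lam i)"
proof (cases "lam ! i = 1")
  case True
  then show ?thesis using p unfolding rem_def is_partition_def
    by (auto simp: sorted_wrt_take dest: in_set_takeD)
next
  case False
  have i: "i < length lam" using c by (simp add: corner_def)
  have pos: "0 < lam ! i" using part_pos[OF p i] .
  show ?thesis unfolding rem_def using False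
  proof (simp, intro part_intro)
    fix a b assume ab: "a < b" "b < length (lam[i := lam ! i - Suc 0])"
    show "lam[i := lam ! i - Suc 0] ! b \<le> lam[i := lam ! i - Suc 0] ! a"
    proof -
      have "lam ! b \<le> lam ! a" using part_le[OF p, of a b] ab by simp
      moreover have "a = i \<Longrightarrow> lam ! b < lam ! i"
        using c ab part_le[OF p, of "Suc i" b] by (auto simp: corner_def)
      ultimately show ?thesis using ab i part_le[OF p, of a i] part_le[OF p, of i b] by (auto simp: nth_list_update)
    qed
  next
    fix a assume "a < length (lam[i := lam ! i - Suc 0])"
    then show "0 < lam[i := lam ! i - Suc 0] ! a"
      using part_pos[OF p, of a] False pos i by (auto simp: nth_list_update)
  qed
qed

lemma rem_cells:
  assumes p: "is_partition lam" and c: "corner lam i"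
  shows "cells (rem lam i) = cells lam - {(i, lam ! i - 1)}"
proof (cases "lam ! i = 1")
  case True
  have "Suc i = length lam" by (rule corner_one[OF p c True])
  then show ?thesis using True unfolding rem_def
    by (auto simp: cells_iff) (metis less_antisym less_Suc0)
next
  case False
  have i: "i < length lam" using c by (simp add: corner_def)
  have pos: "0 < lam ! i" using part_pos[OF p i] .
  show ?thesis using False i pos unfolding rem_def
    by (auto simp: cells_iff nth_list_update split: if_splits)
qed

lemma psize_rem:
  assumes p: "is_partition lam" and c: "corner lam i"
  shows "psize (rem lam i) = psize lam - 1"
proof -
  have i: "i < length lam" using c by (simp add: corner_def)
  have "(i, lam ! i - 1) \<in> cells lam" using part_pos[OF p i] i by (auto simp: cells_iff)
  then show ?thesis using rem_cells[OF p c] card_cells[of lam] card_cells[of "rem lam i"]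
    by (simp add: finite_cells)
qed

lemma covered_rem:
  assumes p: "is_partition lam" and c: "corner lam i"
  shows "covered_by (rem lam i) lam"
proof -
  have i: "i < length lam" using c by (simp add: corner_def)
  have "(i, lam ! i - 1) \<in> cells lam" using part_pos[OF p i] i by (auto simp: cells_iff)
  then have "cells lam - cells (rem lam i) = {(i, lam ! i - 1)}"
    using rem_cells[OF p c] by auto
  then show ?thesis unfolding covered_by_def using rem_part[OF p c] rem_cells[OF p c] by auto
qed

lemma covered_imp:
  assumes p: "is_partition lam" and cov: "covered_by mu lam"
  shows "\<exists>i. corner lam i \<and> mu = rem lam i"
proof -
  have pm: "is_partition mu" and sub: "cells mu \<subseteq> cells lam" and cd: "card (cells lam - cells mu) = 1"
    using cov by (auto simp: covered_by_def)
  obtain c where c: "cells lam - cells mu = {c}" using card_1_singletonE[OF cd] by blast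
  obtain a b where cab: "c = (a, b)" by (cases c)
  have cm: "cells mu = cells lam - {c}" using c sub by auto
  have "c \<in> cells lam" using c by auto
  then have ab: "a < length lam" "b < lam ! a" using cab by (auto simp: cells_iff)
  have bb: "b = lam ! a - 1"
  proof (rule ccontr)
    assume "b \<noteq> lam ! a - 1"
    then have "(a, Suc b) \<in> cells mu" using ab cm cab by (auto simp: cells_iff)
    then have "(a, b) \<in> cells mu" by (rule cells_left)
    then show False using cm cab by auto
  qed
  have cor: "corner lam a"
  proof (rule ccontr)
    assume "\<not> corner lam a"
    then have "Suc a < length lam" "lam ! a \<le> lam ! Suc a" using ab by (auto simp: corner_def)
    then have "(Suc a, b) \<in> cells mu" using ab cm cab by (auto simp: cells_iff)
    then have "(a, b) \<in> cells mu" by (rule cells_down[OF pm])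
    then show False using cm cab by auto
  qed
  have "mu = rem lam a"
    by (rule cells_eq[OF pm rem_part[OF p cor]]) (simp add: rem_cells[OF p cor] cm cab bb)
  then show ?thesis using cor by blast
qed

lemma covers_eq:
  assumes p: "is_partition lam"
  shows "{mu. covered_by mu lam} = rem lam ` {i. corner lam i}"
  using covered_imp[OF p] covered_rem[OF p] by blast

lemma rem_inj:
  assumes p: "is_partition lam"
  shows "inj_on (rem lam) {i. corner lam i}"
proof
  fix i j assume i: "i \<in> {i. corner lam i}" and j: "j \<in> {i. corner lam i}" and eq: "rem lam i = rem lam j"
  have ci: "(i, lam ! i - 1) \<in> cells lam" using i part_pos[OF p, of i] by (auto simp: corner_def cells_iff)
  have cj: "(j, lam ! j - 1) \<in> cells lam" using j part_pos[OF p, of j] by (auto simp: corner_def cells_iff)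
  have "cells lam - {(i, lam ! i - 1)} = cells lam - {(j, lam ! j - 1)}"
    using eq rem_cells[OF p] i j by (metis mem_Collect_eq)
  then have "(i, lam ! i - 1) \<notin> cells lam - {(j, lam ! j - 1)}" by blast
  then have "(i, lam ! i - 1) = (j, lam ! j - 1)" using ci by blast
  then show "i = j" by simp
qed

lemma finite_corners: "finite {i. corner lam i}"
  by (rule finite_subset[of _ "{..<length lam}"]) (auto simp: corner_def)



lemma finite_SYT: "finite (SYT lam)"
proof -
  have "SYT lam \<subseteq> {f. \<forall>x. (x \<in> cells lam \<longrightarrow> f x \<in> {1..psize lam}) \<and> (x \<notin> cells lam \<longrightarrow> f x = 0)}"
    unfolding SYT_def by (auto dest: bij_betwE)
  then show ?thesis
    by (rule finite_subset) (rule finite_set_of_finite_funs[OF finite_cells finite_atLeastAtMost])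
qed

lemma bij_remove_pt:
  assumes "bij_betw T A B" "c \<in> A" "T c = N"
  shows "bij_betw (T(c := 0)) (A - {c}) (B - {N})"
proof -
  have "bij_betw T {c} {N}" using assms by (simp add: bij_betw_def)
  then have "bij_betw T (A - {c}) (B - {N})"
    using assms by (intro bij_betw_DiffI) (auto dest: bij_betwE)
  then show ?thesis by (rule bij_betw_cong[THEN iffD1, rotated]) auto
qed

lemma bij_add_pt:
  assumes "bij_betw T A B" "c \<notin> A" "N \<notin> B"
  shows "bij_betw (T(c := N)) (insert c A) (insert N B)"
proof -
  have "bij_betw (T(c := N)) A B"
    using assms(1) by (rule bij_betw_cong[THEN iffD1, rotated]) (use assms(2) in auto)
  then have "bij_betw (T(c := N)) (A \<union> {c}) (B \<union> {(T(c := N)) c})"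
    using notIn_Un_bij_betw3[of c A "T(c := N)" B] assms by simp
  then show ?thesis by simp
qed

lemma SYT_rec:
  assumes p: "is_partition lam" and ne: "lam \<noteq> []"
  shows "num_SYT lam = (\<Sum>i\<in>{i. corner lam i}. num_SYT (rem lam i))"
proof -
  define N where "N = psize lam"
  define c where "c i = (i, lam ! i - 1)" for i
  define S where "S i = {T \<in> SYT lam. T (c i) = N}" for i
  have N1: "1 \<le> N"
  proof -
    have "0 < lam ! 0" using part_pos[OF p] ne by simp
    moreover have "lam ! 0 \<le> sum_list lam" using ne by (intro elem_le_sum_list) simp
    ultimately show ?thesis by (simp add: N_def psize_def)
  qed
  have cc: "c i \<in> cells lam" if "corner lam i" for i
    using that part_pos[OF p, of i] by (auto simp: corner_def c_def cells_iff)
  have SYT_vals: "T x \<in> {1..psize mu}" if "T \<in> SYT mu" "x \<in> cells mu" for T x mu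
    using that unfolding SYT_def by (auto dest: bij_betwE)
  have cover: "SYT lam = (\<Union>i\<in>{i. corner lam i}. S i)"
  proof
    show "(\<Union>i\<in>{i. corner lam i}. S i) \<subseteq> SYT lam" by (auto simp: S_def)
  next
    show "SYT lam \<subseteq> (\<Union>i\<in>{i. corner lam i}. S i)"
    proof
      fix T assume T: "T \<in> SYT lam"
      then have bT: "bij_betw T (cells lam) {1..N}" by (simp add: SYT_def N_def)
      then have "N \<in> T ` cells lam" using N1 by (simp add: bij_betw_def)
      then obtain a b where ab: "(a, b) \<in> cells lam" "T (a, b) = N" by auto
      have row: "\<And>i j. (i, Suc j) \<in> cells lam \<Longrightarrow> T (i, j) < T (i, Suc j)"
       and col: "\<And>i j. (Suc i, j) \<in> cells lam \<Longrightarrow> T (i, j) < T (Suc i, j)"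
        using T by (auto simp: SYT_def)
      have le: "\<And>x. x \<in> cells lam \<Longrightarrow> T x \<le> N" using SYT_vals[OF T] by (auto simp: N_def)
      have bb: "b = lam ! a - 1"
      proof (rule ccontr)
        assume "b \<noteq> lam ! a - 1"
        then have "(a, Suc b) \<in> cells lam" using ab by (auto simp: cells_iff)
        then show False using row[of a b] le[of "(a, Suc b)"] ab by simp
      qed
      have "corner lam a"
      proof (rule ccontr)
        assume "\<not> corner lam a"
        then have "Suc a < length lam" "lam ! a \<le> lam ! Suc a" using ab by (auto simp: corner_def cells_iff)
        then have "(Suc a, b) \<in> cells lam" using ab by (auto simp: cells_iff)
        then show False using col[of a b] le[of "(Suc a, b)"] ab by simp
      qed
      moreover have "T \<in> S a" using T ab bb by (simp add: S_def c_def)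
      ultimately show "T \<in> (\<Union>i\<in>{i. corner lam i}. S i)" by blast
    qed
  qed
  have disj: "S i \<inter> S j = {}" if "corner lam i" "corner lam j" "i \<noteq> j" for i j
  proof (rule ccontr)
    assume "S i \<inter> S j \<noteq> {}"
    then obtain T where T: "T \<in> SYT lam" "T (c i) = N" "T (c j) = N" by (auto simp: S_def)
    then have "inj_on T (cells lam)" by (simp add: SYT_def bij_betw_def)
    then have "c i = c j" using T cc that by (auto dest: inj_onD)
    then show False using that by (simp add: c_def)
  qed
  have bij: "bij_betw (\<lambda>T. T(c i := 0)) (S i) (SYT (rem lam i))" if ci: "corner lam i" for i
  proof -
    define mu where "mu = rem lam i"
    have pm: "is_partition mu" using rem_part[OF p ci] by (simp add: mu_def)
    have cm: "cells mu = cells lam - {c i}" using rem_cells[OF p ci] by (simp add: mu_def c_def)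
    have pmu: "psize mu = N - 1" using psize_rem[OF p ci] by (simp add: mu_def N_def)
    have cin: "c i \<in> cells lam" using cc[OF ci] .
    have cnot: "c i \<notin> cells mu" using cm by simp
    have nset: "{1..N} - {N} = {1..N - 1}" "insert N {1..N - 1} = {1..N}" using N1 by auto
    have img1: "T(c i := 0) \<in> SYT mu" if T: "T \<in> S i" for T
    proof -
      have TS: "T \<in> SYT lam" "T (c i) = N" using T by (auto simp: S_def)
      have bT: "bij_betw T (cells lam) {1..N}" using TS by (simp add: SYT_def N_def)
      have row: "\<And>a b. (a, Suc b) \<in> cells lam \<Longrightarrow> T (a, b) < T (a, Suc b)"
       and col: "\<And>a b. (Suc a, b) \<in> cells lam \<Longrightarrow> T (a, b) < T (Suc a, b)"
       and out: "\<And>x. x \<notin> cells lam \<Longrightarrow> T x = 0"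
        using TS by (auto simp: SYT_def)
      have "bij_betw (T(c i := 0)) (cells mu) {1..psize mu}"
        using bij_remove_pt[OF bT cin TS(2)] by (simp only: cm pmu nset)
      moreover have "\<forall>x. x \<notin> cells mu \<longrightarrow> (T(c i := 0)) x = 0"
        using out cm by auto
      moreover have "\<forall>a b. (a, Suc b) \<in> cells mu \<longrightarrow> (T(c i := 0)) (a, b) < (T(c i := 0)) (a, Suc b)"
      proof (intro allI impI)
        fix a b assume h: "(a, Suc b) \<in> cells mu"
        have "(a, b) \<in> cells mu" using cells_left[OF h] .
        then show "(T(c i := 0)) (a, b) < (T(c i := 0)) (a, Suc b)"
          using h row[of a b] cm by auto
      qed
      moreover have "\<forall>a b. (Suc a, b) \<in> cells mu \<longrightarrow> (T(c i := 0)) (a, b) < (T(c i := 0)) (Suc a, b)"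
      proof (intro allI impI)
        fix a b assume h: "(Suc a, b) \<in> cells mu"
        have "(a, b) \<in> cells mu" using cells_down[OF pm h] .
        then show "(T(c i := 0)) (a, b) < (T(c i := 0)) (Suc a, b)"
          using h col[of a b] cm by auto
      qed
      ultimately show ?thesis unfolding SYT_def by blast
    qed
    have img2: "T'(c i := N) \<in> S i" if T': "T' \<in> SYT mu" for T'
    proof -
      have bT: "bij_betw T' (cells mu) {1..N - 1}" using T' by (simp add: SYT_def pmu)
      have row: "\<And>a b. (a, Suc b) \<in> cells mu \<Longrightarrow> T' (a, b) < T' (a, Suc b)"
       and col: "\<And>a b. (Suc a, b) \<in> cells mu \<Longrightarrow> T' (a, b) < T' (Suc a, b)"
       and out: "\<And>x. x \<notin> cells mu \<Longrightarrow> T' x = 0"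
        using T' by (auto simp: SYT_def)
      have vals: "T' x < N" if x: "x \<in> cells mu" for x
      proof -
        have "T' x \<in> {1..N - 1}" using SYT_vals[OF T' x] pmu by simp
        then have "T' x \<le> N - 1" by simp
        then show ?thesis using N1 by linarith
      qed
      have ilen: "i < length lam" and pos: "0 < lam ! i" using ci part_pos[OF p, of i] by (auto simp: corner_def)
      have "bij_betw (T'(c i := N)) (insert (c i) (cells mu)) (insert N {1..N - 1})"
      proof -
        have nN: "N \<notin> {1..N - 1}"
        proof
          assume "N \<in> {1..N - 1}"
          then have "N \<le> N - 1" by simp
          then show False using N1 by linarith
        qed
        show ?thesis by (rule bij_add_pt[OF bT cnot nN])
      qed
      moreover have ins: "insert (c i) (cells mu) = cells lam" by (simp only: cm insert_Diff[OF cin])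
      ultimately have "bij_betw (T'(c i := N)) (cells lam) {1..N}"
        by (simp only: nset(2) ins)
      then have "bij_betw (T'(c i := N)) (cells lam) {1..psize lam}"
        by (simp only: N_def)
      moreover have "\<forall>x. x \<notin> cells lam \<longrightarrow> (T'(c i := N)) x = 0"
        using out cm cin by auto
      moreover have "\<forall>a b. (a, Suc b) \<in> cells lam \<longrightarrow> (T'(c i := N)) (a, b) < (T'(c i := N)) (a, Suc b)"
      proof (intro allI impI)
        fix a b assume h: "(a, Suc b) \<in> cells lam"
        have ab: "(a, b) \<in> cells lam" using cells_left[OF h] .
        have "(a, b) \<noteq> c i" using h pos by (auto simp: c_def cells_iff)
        then have abm: "(a, b) \<in> cells mu" using ab cm by auto
        show "(T'(c i := N)) (a, b) < (T'(c i := N)) (a, Suc b)"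
        proof (cases "(a, Suc b) = c i")
          case True
          then show ?thesis using vals[OF abm] \<open>(a, b) \<noteq> c i\<close> by simp
        next
          case False
          then have "(a, Suc b) \<in> cells mu" using h cm by auto
          then show ?thesis using row[of a b] False \<open>(a, b) \<noteq> c i\<close> by simp
        qed
      qed
      moreover have "\<forall>a b. (Suc a, b) \<in> cells lam \<longrightarrow> (T'(c i := N)) (a, b) < (T'(c i := N)) (Suc a, b)"
      proof (intro allI impI)
        fix a b assume h: "(Suc a, b) \<in> cells lam"
        have ab: "(a, b) \<in> cells lam" using cells_down[OF p h] .
        have "(a, b) \<noteq> c i"
        proof
          assume "(a, b) = c i"
          then have "a = i" "b = lam ! i - 1" by (auto simp: c_def)
          then show False using h ci pos by (auto simp: corner_def cells_iff)
        qed
        then have abm: "(a, b) \<in> cells mu" using ab cm by auto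
        show "(T'(c i := N)) (a, b) < (T'(c i := N)) (Suc a, b)"
        proof (cases "(Suc a, b) = c i")
          case True
          then show ?thesis using vals[OF abm] \<open>(a, b) \<noteq> c i\<close> by simp
        next
          case False
          then have "(Suc a, b) \<in> cells mu" using h cm by auto
          then show ?thesis using col[of a b] False \<open>(a, b) \<noteq> c i\<close> by simp
        qed
      qed
      ultimately have "T'(c i := N) \<in> SYT lam" unfolding SYT_def by blast
      then show ?thesis by (simp add: S_def)
    qed
    show ?thesis unfolding mu_def[symmetric]
    proof (rule bij_betw_byWitness[where f'="\<lambda>T. T(c i := N)"])
      show "\<forall>T\<in>S i. (T(c i := 0))(c i := N) = T" by (auto simp: S_def)
      show "\<forall>T\<in>SYT mu. (T(c i := N))(c i := 0) = T"
      proof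
        fix T assume "T \<in> SYT mu"
        then have "T (c i) = 0" using cnot unfolding SYT_def by blast
        then show "(T(c i := N))(c i := 0) = T" using fun_upd_idem[of T "c i" 0] by simp
      qed
      show "(\<lambda>T. T(c i := 0)) ` S i \<subseteq> SYT mu" using img1 by auto
      show "(\<lambda>T. T(c i := N)) ` SYT mu \<subseteq> S i" using img2 by auto
    qed
  qed
  have "num_SYT lam = card (\<Union>i\<in>{i. corner lam i}. S i)"
    by (simp add: num_SYT_def cover[symmetric])
  also have "\<dots> = (\<Sum>i\<in>{i. corner lam i}. card (S i))"
    by (rule card_UN_disjoint) (use finite_corners disj finite_SYT[of lam] in \<open>auto simp: S_def\<close>)
  also have "\<dots> = (\<Sum>i\<in>{i. corner lam i}. num_SYT (rem lam i))"
    by (intro sum.cong refl) (auto simp: num_SYT_def intro: bij_betw_same_card bij)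
  finally show ?thesis .
qed



definition Wr :: "(nat \<Rightarrow> complex poly) \<Rightarrow> nat list \<Rightarrow> complex poly" where
  "Wr A lam = wronskian (length lam) (\<lambda>k. A (degs lam k))"

definition Nf :: "nat list \<Rightarrow> nat" where
  "Nf lam = (\<Prod>k<length lam. fact (degs lam k))"

definition Bp :: "(nat \<Rightarrow> complex poly) \<Rightarrow> nat list \<Rightarrow> complex poly" where
  "Bp A lam = smult (inverse (of_nat (Nf lam))) (Wr A lam)"

lemma Nf_pos: "Nf lam > 0"
  unfolding Nf_def by (intro prod_pos) auto

lemma degs_pos:
  assumes "is_partition lam" "k < length lam" shows "1 \<le> degs lam k"
proof -
  have "length lam - 1 - k < length lam" using assms by linarith
  then have "0 < lam ! (length lam - 1 - k)" using part_pos[OF assms(1)] by blast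
  then show ?thesis unfolding degs_def by linarith
qed

lemma degs_mono:
  assumes "is_partition lam" "k < l" "l < length lam" shows "degs lam k < degs lam l"
proof -
  have "length lam - 1 - l \<le> length lam - 1 - k" "length lam - 1 - k < length lam" using assms by linarith+
  then have "lam ! (length lam - 1 - k) \<le> lam ! (length lam - 1 - l)" using part_le[OF assms(1)] by blast
  then show ?thesis unfolding degs_def using assms(2) by linarith
qed

lemma smult_sum_right: "smult c (\<Sum>i\<in>S. f i) = (\<Sum>i\<in>S. smult c (f i))"
  by (induction S rule: infinite_finite_induct) (auto simp: smult_add_right)

lemma fact_pred: "1 \<le> m \<Longrightarrow> fact m = m * fact (m - 1)"
  by (cases m) auto

lemma of_nat_mult_poly: "(of_nat m :: complex poly) * p = smult (of_nat m) p"
  by (simp add: of_nat_poly)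

lemma appell_deriv:
  assumes "appell A"
  shows "pderiv (A m) = smult (of_nat m) (A (m - 1))"
proof (cases m)
  case 0
  then show ?thesis using assms by (simp add: appell_def)
next
  case (Suc k)
  then show ?thesis using assms by (simp add: appell_def of_nat_mult_poly)
qed

lemma wronskian_smult1:
  assumes "k < r"
  shows "wronskian r (f(k := smult c g)) = smult c (wronskian r (f(k := g)))"
proof -
  have "wronskian r (f(k := smult c g)) = wronskian r (\<lambda>j. smult (if j = k then c else 1) ((f(k := g)) j))"
    by (intro wronskian_cong) auto
  also have "\<dots> = smult (\<Prod>j<r. if j = k then c else 1) (wronskian r (f(k := g)))"
    by (rule wronskian_smult)
  also have "(\<Prod>j<r. if j = k then c else 1) = c"
    using assms by (simp add: prod.delta)
  finally show ?thesis .
qed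

lemma Bp_deriv:
  assumes A: "appell A" and p: "is_partition lam"
  shows "pderiv (Bp A lam) = (\<Sum>i\<in>{i. corner lam i}. Bp A (rem lam i))"
proof (cases "lam = []")
  case True
  then show ?thesis by (simp add: Bp_def Wr_def corner_def wronskian_def det_dim_zero)
next
  case False
  define r where "r = length lam"
  define n where "n = degs lam"
  define f where "f k = A (n k)" for k
  define W where "W k = wronskian r (f(k := A (n k - 1)))" for k
  have r1: "1 \<le> r" using False by (cases lam) (simp_all add: r_def)
  have npos: "k < r \<Longrightarrow> 1 \<le> n k" for k using degs_pos[OF p] by (simp add: r_def n_def)
  have "pderiv (Wr A lam) = (\<Sum>k<r. wronskian r (f(k := pderiv (f k))))"
    unfolding Wr_def r_def[symmetric] n_def[symmetric] f_def[symmetric] by (rule wronskian_pderiv)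
  also have "\<dots> = (\<Sum>k<r. smult (of_nat (n k)) (W k))"
    by (intro sum.cong refl) (simp add: W_def f_def appell_deriv[OF A] wronskian_smult1)
  also have "\<dots> = (\<Sum>i<r. smult (of_nat (n (r - Suc i))) (W (r - Suc i)))"
    by (rule sum.nat_diff_reindex[symmetric])
  also have "\<dots> = (\<Sum>i\<in>{i. corner lam i}. smult (of_nat (n (r - Suc i))) (W (r - Suc i)))"
  proof (rule sum.mono_neutral_right)
    show "finite {..<r}" by simp
    show "{i. corner lam i} \<subseteq> {..<r}" by (auto simp: corner_def r_def)
    show "\<forall>i\<in>{..<r} - {i. corner lam i}. smult (of_nat (n (r - Suc i))) (W (r - Suc i)) = 0"
    proof
      fix i assume i: "i \<in> {..<r} - {i. corner lam i}"
      then have si: "Suc i < r" and eq: "lam ! Suc i = lam ! i"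
        using part_le[OF p, of i "Suc i"] by (auto simp: corner_def r_def)
      define k where "k = r - Suc i"
      have k: "1 \<le> k" "k < r" using si by (auto simp: k_def)
      have "n (k - 1) = n k - 1"
        using k si eq unfolding n_def degs_def r_def[symmetric] k_def
        by (simp add: Suc_diff_Suc)
      then have "W k = 0" unfolding W_def
        by (intro wronskian_ident[of k "k - 1"]) (use k in \<open>auto simp: f_def\<close>)
      then show "smult (of_nat (n (r - Suc i))) (W (r - Suc i)) = 0" by (simp add: k_def)
    qed
  qed
  finally have dW: "pderiv (Wr A lam) = (\<Sum>i\<in>{i. corner lam i}. smult (of_nat (n (r - Suc i))) (W (r - Suc i)))" .
  have trm: "smult (inverse (of_nat (Nf lam))) (smult (of_nat (n (r - Suc i))) (W (r - Suc i))) = Bp A (rem lam i)"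
    if ci: "corner lam i" for i
  proof -
    have ir: "i < r" using ci by (simp add: corner_def r_def)
    show ?thesis
    proof (cases "lam ! i = 1")
      case True
      have ri: "Suc i = r" using corner_one[OF p ci True] by (simp add: r_def)
      define mu where "mu = rem lam i"
      have mu: "mu = take i lam" using True by (simp add: mu_def rem_def)
      have lmu: "length mu = i" using ir by (simp add: mu r_def)
      have "r - 1 - 0 = i" using ri by simp
      then have n0: "n 0 = 1" using True by (simp add: n_def degs_def r_def[symmetric])
      have A0: "A 0 = 1" using A by (simp add: appell_def)
      have dmu: "degs mu j = n (Suc j) - 1" if j: "j < i" for j
        using j by (simp add: degs_def lmu mu n_def r_def[symmetric] ri[symmetric])
      define P where "P = (\<Prod>j<i. of_nat (n (Suc j)) :: complex)"
      have "W 0 = wronskian (Suc i) (f(0 := 1))" using ri by (simp add: W_def n0 A0)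
      also have "\<dots> = wronskian i (\<lambda>j. pderiv (f (Suc j)))"
        by (subst wronskian_one_first) simp_all
      also have "\<dots> = wronskian i (\<lambda>j. smult (of_nat (n (Suc j))) (A (n (Suc j) - 1)))"
        by (simp add: f_def appell_deriv[OF A])
      also have "\<dots> = smult P (wronskian i (\<lambda>j. A (n (Suc j) - 1)))"
        by (simp add: wronskian_smult P_def)
      also have "wronskian i (\<lambda>j. A (n (Suc j) - 1)) = Wr A mu"
        unfolding Wr_def lmu by (intro wronskian_cong) (simp add: dmu)
      finally have W0: "W 0 = smult P (Wr A mu)" .
      have "Nf lam = (\<Prod>j<Suc i. fact (n j))" using ri by (simp add: Nf_def n_def r_def)
      also have "\<dots> = (\<Prod>j<i. fact (n (Suc j)))" by (simp add: prod.lessThan_Suc_shift n0 del: prod.lessThan_Suc)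
      also have "\<dots> = (\<Prod>j<i. n (Suc j) * fact (n (Suc j) - 1))"
      proof (intro prod.cong refl)
        fix j assume "j \<in> {..<i}"
        then have "1 \<le> n (Suc j)" using npos ri by simp
        then show "fact (n (Suc j)) = n (Suc j) * fact (n (Suc j) - 1)" by (rule fact_pred)
      qed
      also have "\<dots> = (\<Prod>j<i. n (Suc j)) * Nf mu"
        by (simp add: Nf_def lmu dmu prod.distrib)
      finally have Nfl: "Nf lam = (\<Prod>j<i. n (Suc j)) * Nf mu" .
      have nS: "0 < n (Suc j)" if "j < i" for j
      proof -
        have "Suc j < r" using that ri by simp
        then show ?thesis using npos[of "Suc j"] by simp
      qed
      have P0: "P \<noteq> 0" using nS by (auto simp: P_def)
      have "of_nat (Nf lam) = P * of_nat (Nf mu)" by (simp add: Nfl P_def)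
      then have "inverse (of_nat (Nf lam)) * P = inverse (of_nat (Nf mu) :: complex)"
        using P0 by (simp add: field_simps)
      then show ?thesis using ri
        by (simp add: W0 n0 Bp_def mu_def[symmetric] mult_ac)
    next
      case False
      define k where "k = r - Suc i"
      have kr: "k < r" and ik: "r - 1 - k = i" using ir by (auto simp: k_def)
      define mu where "mu = rem lam i"
      have mu: "mu = lam[i := lam ! i - 1]" using False by (simp add: mu_def rem_def)
      have lmu: "length mu = r" by (simp add: mu r_def)
      have li: "0 < lam ! i" using part_pos[OF p] ir by (simp add: r_def)
      have dmu: "degs mu j = (if j = k then n k - 1 else n j)" if j: "j < r" for j
      proof -
        have iff: "(i = r - 1 - j) = (j = k)" using j ir by (auto simp: k_def)
        have jl: "r - 1 - j < length lam" using j by (simp add: r_def)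
        have "degs mu j = mu ! (r - 1 - j) + j" by (simp add: degs_def lmu)
        also have "mu ! (r - 1 - j) = (if j = k then lam ! i - 1 else lam ! (r - 1 - j))"
        proof (cases "j = k")
          case True
          then have "r - 1 - j = i" using ik by simp
          then show ?thesis using True jl unfolding mu by simp
        next
          case False
          then have "i \<noteq> r - 1 - j" using iff by simp
          then show ?thesis using False unfolding mu by simp
        qed
        finally have "degs mu j = (if j = k then lam ! i - 1 else lam ! (r - 1 - j)) + j" .
        moreover have "n j = lam ! (r - 1 - j) + j" by (simp add: n_def degs_def r_def)
        moreover have "j = k \<Longrightarrow> r - 1 - j = i" using ik by simp
        ultimately show ?thesis using li by auto
      qed
      have Wk: "W k = Wr A mu"
        unfolding Wr_def lmu W_def by (intro wronskian_cong) (simp add: dmu f_def)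
      have kin: "k \<in> {..<r}" using kr by simp
      have "Nf lam = fact (n k) * (\<Prod>j\<in>{..<r} - {k}. fact (n j))"
        unfolding Nf_def r_def[symmetric] n_def[symmetric] by (rule prod.remove[OF finite_lessThan kin])
      also have "\<dots> = n k * (fact (n k - 1) * (\<Prod>j\<in>{..<r} - {k}. fact (n j)))"
        using fact_pred[OF npos[OF kr]] by simp
      also have "fact (n k - 1) * (\<Prod>j\<in>{..<r} - {k}. fact (n j)) = Nf mu"
      proof -
        have "Nf mu = fact (degs mu k) * (\<Prod>j\<in>{..<r} - {k}. fact (degs mu j))"
          unfolding Nf_def lmu by (rule prod.remove[OF finite_lessThan kin])
        also have "(\<Prod>j\<in>{..<r} - {k}. fact (degs mu j)) = (\<Prod>j\<in>{..<r} - {k}. fact (n j))"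
          by (intro prod.cong refl) (simp add: dmu)
        finally show ?thesis using dmu[OF kr] by simp
      qed
      finally have Nfl: "Nf lam = n k * Nf mu" .
      have "inverse (of_nat (Nf lam)) * of_nat (n k) = inverse (of_nat (Nf mu) :: complex)"
        using npos[OF kr] by (simp add: Nfl field_simps)
      then show ?thesis
        by (simp add: Bp_def Wk k_def[symmetric] mu_def[symmetric] mult_ac)
    qed
  qed
  have "pderiv (Bp A lam) = smult (inverse (of_nat (Nf lam))) (pderiv (Wr A lam))"
    by (simp add: Bp_def pderiv_smult)
  also have "\<dots> = (\<Sum>i\<in>{i. corner lam i}. smult (inverse (of_nat (Nf lam))) (smult (of_nat (n (r - Suc i))) (W (r - Suc i))))"
    unfolding dW by (simp add: smult_sum_right)
  also have "\<dots> = (\<Sum>i\<in>{i. corner lam i}. Bp A (rem lam i))"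
    by (intro sum.cong refl) (simp only: mem_Collect_eq trm)
  finally show ?thesis .
qed



lemma appell_monom: "appell (\<lambda>m. monom (1::complex) m)"
  unfolding appell_def
  by (auto simp: pderiv_monom of_nat_mult_poly smult_monom monom_0 one_pCons)

lemma vdm_ne0:
  assumes p: "is_partition lam"
  shows "vandermonde_int (length lam) (degs lam) \<noteq> 0"
  unfolding vandermonde_int_def
  using degs_mono[OF p] by (auto simp: prod_zero_iff) (metis less_irrefl)

lemma sum_degs: "(\<Sum>j<length lam. degs lam j) - (\<Sum>i<length lam. i) = psize lam"
proof -
  have "(\<Sum>j<length lam. degs lam j) = (\<Sum>j<length lam. lam ! (length lam - Suc j)) + (\<Sum>i<length lam. i)"
    by (simp add: degs_def sum.distrib)
  also have "(\<Sum>j<length lam. lam ! (length lam - Suc j)) = (\<Sum>j<length lam. lam ! j)"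
    by (rule sum.nat_diff_reindex)
  also have "\<dots> = psize lam" by (simp add: psize_def sum_list_sum_nth atLeast0LessThan)
  finally show ?thesis by simp
qed

lemma Wr_monom:
  "Wr (\<lambda>m. monom 1 m) lam = smult (of_int (vandermonde_int (length lam) (degs lam))) (monom 1 (psize lam))"
proof -
  have "Wr (\<lambda>m. monom 1 m) lam =
     smult (det (mat (length lam) (length lam) (\<lambda>(i,j). ffc (of_nat (degs lam j)) i))) (monom 1 (psize lam))"
    unfolding Wr_def wronskian_monom sum_degs ..
  also have "det (mat (length lam) (length lam) (\<lambda>(i,j). ffc (of_nat (degs lam j)) i)) =
       (\<Prod>j<length lam. \<Prod>i<j. of_nat (degs lam j) - of_nat (degs lam i))"
    by (rule falling_vdm)
  also have "\<dots> = of_int (vandermonde_int (length lam) (degs lam))"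
    by (simp add: vandermonde_int_def of_int_prod)
  finally show ?thesis .
qed

definition hh :: "nat list \<Rightarrow> complex" where
  "hh lam = of_int (vandermonde_int (length lam) (degs lam)) / of_nat (Nf lam)"

lemma Bp_monom: "Bp (\<lambda>m. monom 1 m) lam = smult (hh lam) (monom 1 (psize lam))"
  by (simp add: Bp_def Wr_monom hh_def field_simps)

lemma hh_rec:
  assumes p: "is_partition lam"
  shows "of_nat (psize lam) * hh lam = (\<Sum>i\<in>{i. corner lam i}. hh (rem lam i))"
proof -
  have "pderiv (Bp (\<lambda>m. monom 1 m) lam) = (\<Sum>i\<in>{i. corner lam i}. Bp (\<lambda>m. monom 1 m) (rem lam i))"
    by (rule Bp_deriv[OF appell_monom p])
  moreover have "(\<Sum>i\<in>{i. corner lam i}. Bp (\<lambda>m. monom 1 m) (rem lam i)) =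
      (\<Sum>i\<in>{i. corner lam i}. smult (hh (rem lam i)) (monom 1 (psize lam - 1)))"
    by (intro sum.cong refl) (simp add: Bp_monom psize_rem[OF p])
  ultimately have "smult (hh lam) (monom (of_nat (psize lam)) (psize lam - 1)) =
      (\<Sum>i\<in>{i. corner lam i}. smult (hh (rem lam i)) (monom 1 (psize lam - 1)))"
    by (simp add: Bp_monom pderiv_smult pderiv_monom)
  then have "coeff (smult (hh lam) (monom (of_nat (psize lam)) (psize lam - 1))) (psize lam - 1) =
      coeff (\<Sum>i\<in>{i. corner lam i}. smult (hh (rem lam i)) (monom 1 (psize lam - 1))) (psize lam - 1)"
    by simp
  then show ?thesis by (simp add: coeff_sum mult_ac)
qed

lemma SYT_nil: "num_SYT [] = 1"
proof -
  have "SYT [] = {\<lambda>_. 0}"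
    by (auto simp: SYT_def cells_def psize_def bij_betw_def)
  then show ?thesis by (simp add: num_SYT_def)
qed

lemma hook:
  assumes "is_partition lam"
  shows "of_nat (num_SYT lam) = of_nat (fact (psize lam)) * hh lam"
  using assms
proof (induction "psize lam" arbitrary: lam rule: less_induct)
  case less
  show ?case
  proof (cases "lam = []")
    case True
    then show ?thesis by (simp add: SYT_nil hh_def vandermonde_int_def Nf_def psize_def)
  next
    case False
    have p: "is_partition lam" by (rule less.prems)
    have N1: "1 \<le> psize lam"
    proof -
      have "0 < lam ! 0" using part_pos[OF p] False by simp
      moreover have "lam ! 0 \<le> sum_list lam" using False by (intro elem_le_sum_list) simp
      ultimately show ?thesis by (simp add: psize_def)
    qed
    have "of_nat (num_SYT lam) = (\<Sum>i\<in>{i. corner lam i}. (of_nat (num_SYT (rem lam i)) :: complex))"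
      by (simp add: SYT_rec[OF p False])
    also have "\<dots> = (\<Sum>i\<in>{i. corner lam i}. of_nat (fact (psize lam - 1)) * hh (rem lam i))"
    proof (intro sum.cong refl)
      fix i assume "i \<in> {i. corner lam i}"
      then have ci: "corner lam i" by simp
      have "psize (rem lam i) < psize lam" using psize_rem[OF p ci] N1 by simp
      then show "(of_nat (num_SYT (rem lam i)) :: complex) = of_nat (fact (psize lam - 1)) * hh (rem lam i)"
        using less.hyps[OF _ rem_part[OF p ci]] psize_rem[OF p ci] by simp
    qed
    also have "\<dots> = of_nat (fact (psize lam - 1)) * (of_nat (psize lam) * hh lam)"
      by (simp add: hh_rec[OF p] sum_distrib_left)
    also have "\<dots> = of_nat (fact (psize lam)) * hh lam"
      using fact_pred[OF N1] by (simp add: mult_ac)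
    finally show ?thesis .
  qed
qed

lemma wa_eq: "wronskian_appell A lam = smult (inverse (of_int (vandermonde_int (length lam) (degs lam)))) (Wr A lam)"
  by (cases "lam = []") (simp_all add: wronskian_appell_def Wr_def wronskian_def vandermonde_int_def det_dim_zero)

lemma FW:
  assumes p: "is_partition lam"
  shows "of_nat (num_SYT lam) * wronskian_appell A lam = smult (of_nat (fact (psize lam))) (Bp A lam)"
proof -
  have v: "(of_int (vandermonde_int (length lam) (degs lam)) :: complex) \<noteq> 0" using vdm_ne0[OF p] by simp
  have n: "(of_nat (Nf lam) :: complex) \<noteq> 0" using Nf_pos[of lam] by simp
  have "of_nat (num_SYT lam) * wronskian_appell A lam =
      smult (of_nat (fact (psize lam)) * hh lam * inverse (of_int (vandermonde_int (length lam) (degs lam)))) (Wr A lam)"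
    by (simp add: hook[OF p] wa_eq of_nat_mult_poly mult_ac)
  also have "\<dots> = smult (of_nat (fact (psize lam))) (Bp A lam)"
    using v n by (simp add: Bp_def hh_def field_simps)
  finally show ?thesis .
qed

theorem theorem5p1:
  fixes A :: "nat \<Rightarrow> complex poly" and lam :: "nat list"
  assumes "appell A" and "is_partition lam"
  shows "of_nat (num_SYT lam) * pderiv (wronskian_appell A lam)
         = of_nat (psize lam) *
           (\<Sum>mu\<in>{mu. covered_by mu lam}. of_nat (num_SYT mu) * wronskian_appell A mu)"
proof -
  note A = assms(1) and p = assms(2)
  have "of_nat (num_SYT lam) * pderiv (wronskian_appell A lam) = pderiv (of_nat (num_SYT lam) * wronskian_appell A lam)"
    by (simp add: of_nat_mult_poly pderiv_smult)
  also have "\<dots> = smult (of_nat (fact (psize lam))) (\<Sum>i\<in>{i. corner lam i}. Bp A (rem lam i))"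
    by (simp add: FW[OF p] pderiv_smult Bp_deriv[OF A p])
  also have "\<dots> = of_nat (psize lam) * (\<Sum>i\<in>{i. corner lam i}. smult (of_nat (fact (psize lam - 1))) (Bp A (rem lam i)))"
  proof (cases "lam = []")
    case True
    then show ?thesis by (simp add: corner_def)
  next
    case False
    have N1: "1 \<le> psize lam"
    proof -
      have "0 < lam ! 0" using part_pos[OF p] False by simp
      moreover have "lam ! 0 \<le> sum_list lam" using False by (intro elem_le_sum_list) simp
      ultimately show ?thesis by (simp add: psize_def)
    qed
    show ?thesis
      using fact_pred[OF N1] by (simp add: of_nat_mult_poly smult_sum_right[symmetric] mult_ac)
  qed
  also have "(\<Sum>i\<in>{i. corner lam i}. smult (of_nat (fact (psize lam - 1))) (Bp A (rem lam i))) =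
      (\<Sum>i\<in>{i. corner lam i}. of_nat (num_SYT (rem lam i)) * wronskian_appell A (rem lam i))"
    by (intro sum.cong refl) (simp add: FW[OF rem_part[OF p]] psize_rem[OF p])
  also have "\<dots> = (\<Sum>mu\<in>{mu. covered_by mu lam}. of_nat (num_SYT mu) * wronskian_appell A mu)"
    unfolding covers_eq[OF p] by (rule sum.reindex[OF rem_inj[OF p], symmetric, unfolded comp_def])
  finally show ?thesis .
qed


end
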